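(* The set of points of exact period $4$ under $G$ lies on the curve \[ u^{2}(-v^{2}+v)+u(v^{3}-v^{2}-v+1)+v^{3}+v^{2}=0, \] and the Zariski closure in $\mathbb{C}^2$ of this set is this curve (this is the equation of period four orbits on the $(u,v)$-plane).
   Context: Let \[ G(u,v)=\left(\frac{-u+v+uv}{u},\ \frac{u^{2}-u+v-u^{2}v-uv+uv^{2}+v^{2}}{u}\right), \] defined for $(u,v)\in\mathbb{C}^2$ with $u\neq 0$. A point $(u,v)$ has exact period $n$ under $G$ if the iterates $G^k(u,v)$, $0\le k\le n-1$, all have nonzero first coordinate, $G^n(u,v)=(u,v)$, and $G^k(u,v)\neq(u,v)$ for $0<k<n$. *)

theory Defs
  imports Complex_Main "HOL-Computational_Algebra.Polynomial"
begin

text \<open>The map G on pairs (u,v); only meaningful for u nonzero.\<close>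
definition G :: "complex \<times> complex \<Rightarrow> complex \<times> complex" where
  "G p = (let u = fst p; v = snd p in
     ((- u + v + u * v) / u,
      (u^2 - u + v - u^2 * v - u * v + u * v^2 + v^2) / u))"

definition exact_period :: "nat \<Rightarrow> complex \<times> complex \<Rightarrow> bool" where
  "exact_period n z \<longleftrightarrow>
     (\<forall>k<n. fst ((G ^^ k) z) \<noteq> 0) \<and> (G ^^ n) z = z \<and>
     (\<forall>k. 0 < k \<and> k < n \<longrightarrow> (G ^^ k) z \<noteq> z)"

text \<open>Bivariate complex polynomials represented as C[v][u] (outer variable u),
  evaluated at the point (u,v).\<close>
definition eval2 :: "complex poly poly \<Rightarrow> complex \<times> complex \<Rightarrow> complex" where
  "eval2 p z = poly (poly p [:snd z:]) (fst z)"

definition zariski_closure :: "(complex \<times> complex) set \<Rightarrow> (complex \<times> complex) set" where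
  "zariski_closure S =
     {z. \<forall>p. (\<forall>y\<in>S. eval2 p y = 0) \<longrightarrow> eval2 p z = 0}"

definition period4_curve :: "(complex \<times> complex) set" where
  "period4_curve = {z. let u = fst z; v = snd z in
     u^2 * (v - v^2) + u * (v^3 - v^2 - v + 1) + v^3 + v^2 = 0}"

end

theory Submission imports Defs "HOL-Computational_Algebra.Polynomial_Factorial" begin
definition nx :: "complex \<Rightarrow> complex \<Rightarrow> complex" where "nx u e = u + e*(1+u)"
definition Ccurve :: "complex \<Rightarrow> complex \<Rightarrow> complex" where
  "Ccurve u v = u^2*(v - v^2) + u*(v^3 - v^2 - v + 1) + v^3 + v^2"
lemma lc: "(c::complex) * A = B * K + F \<Longrightarrow> A = 0 \<Longrightarrow> B = 0 \<Longrightarrow> F = 0" by simp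
lemma c3: "u^4 * (u - (nx (nx (nx x d) (x*d)) ((nx x d)*(x*d)))) = (u*x - (u^2 + d*(1+u)))*(0 - u^6*d^4 - 2*u^6*d^3 - u^6*d^2 - 3*u^5*d^5 - u^5*d^4*x - 8*u^5*d^4 - 2*u^5*d^3*x - 7*u^5*d^3 - u^5*d^2*x - 3*u^5*d^2 - u^5*d - 3*u^4*d^6 - 2*u^4*d^5*x - 13*u^4*d^5 - u^4*d^4*x^2 - 6*u^4*d^4*x - 18*u^4*d^4 - 2*u^4*d^3*x^2 - 6*u^4*d^3*x - 12*u^4*d^3 - u^4*d^2*x^2 - 3*u^4*d^2*x - 6*u^4*d^2 - u^4*d*x - 2*u^4*d - u^3*d^7 - u^3*d^6*x - 10*u^3*d^6 - u^3*d^5*x^2 - 6*u^3*d^5*x - 22*u^3*d^5 - u^3*d^4*x^3 - 4*u^3*d^4*x^2 - 10*u^3*d^4*x - 20*u^3*d^4 - 2*u^3*d^3*x^3 - 5*u^3*d^3*x^2 - 8*u^3*d^3*x - 12*u^3*d^3 - u^3*d^2*x^3 - 3*u^3*d^2*x^2 - 5*u^3*d^2*x - 6*u^3*d^2 - u^3*d*x^2 - 2*u^3*d*x - 2*u^3*d - u^3 - 3*u^2*d^7 - 2*u^2*d^6*x - 13*u^2*d^6 - u^2*d^5*x^2 - 6*u^2*d^5*x - 18*u^2*d^5 - 2*u^2*d^4*x^2 - 6*u^2*d^4*x - 12*u^2*d^4 - u^2*d^3*x^2 - 3*u^2*d^3*x - 6*u^2*d^3 - u^2*d^2*x - 2*u^2*d^2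 - 3*u*d^7 - u*d^6*x - 8*u*d^6 - 2*u*d^5*x - 7*u*d^5 - u*d^4*x - 3*u*d^4 - u*d^3 - d^7 - 2*d^6 - d^5) + Ccurve u (u+d)*(d*(1+u)*(0 - u^4*d^2 - u^4*d - 2*u^3*d^3 - 3*u^3*d^2 - u^3*d - u^3 - u^2*d^4 - 4*u^2*d^3 - 3*u^2*d^2 - u^2*d - u^2 - 2*u*d^4 - 3*u*d^3 - u*d^2 - d^4 - d^3))"
  for u d x :: complex unfolding nx_def Ccurve_def by algebra

lemma c4: "u^4 * (u*((nx (nx x d) (x*d))*((nx x d)*(x*d))) - d) = (u*x - (u^2 + d*(1+u)))*(u^7*d^4 + 2*u^7*d^3 + u^7*d^2 + 3*u^6*d^5 + u^6*d^4*x + 8*u^6*d^4 + 2*u^6*d^3*x + 7*u^6*d^3 + u^6*d^2*x + 3*u^6*d^2 + u^6*d + 3*u^5*d^6 + 2*u^5*d^5*x + 13*u^5*d^5 + u^5*d^4*x^2 + 6*u^5*d^4*x + 18*u^5*d^4 + 2*u^5*d^3*x^2 + 6*u^5*d^3*x + 12*u^5*d^3 + u^5*d^2*x^2 + 3*u^5*d^2*x + 4*u^5*d^2 + u^5*d*x + u^4*d^7 + u^4*d^6*x + 10*u^4*d^6 + u^4*d^5*x^2 + 6*u^4*d^5*x + 22*u^4*d^5 + u^4*d^4*x^3 + 4*u^4*d^4*x^2 + 10*u^4*d^4*x + 20*u^4*d^4 + 2*u^4*d^3*x^3 + 5*u^4*d^3*x^2 + 8*u^4*d^3*x + 10*u^4*d^3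 + u^4*d^2*x^3 + 3*u^4*d^2*x^2 + 3*u^4*d^2*x + 2*u^4*d^2 + u^4*d*x^2 + 3*u^3*d^7 + 2*u^3*d^6*x + 13*u^3*d^6 + u^3*d^5*x^2 + 6*u^3*d^5*x + 18*u^3*d^5 + 2*u^3*d^4*x^2 + 6*u^3*d^4*x + 12*u^3*d^4 + u^3*d^3*x^2 + 3*u^3*d^3*x + 4*u^3*d^3 + u^3*d^2*x + 3*u^2*d^7 + u^2*d^6*x + 8*u^2*d^6 + 2*u^2*d^5*x + 7*u^2*d^5 + u^2*d^4*x + 3*u^2*d^4 + u^2*d^3 + u*d^7 + 2*u*d^6 + u*d^5) + Ccurve u (u+d)*(u*(1+u)*d*(u^4*d^2 + u^4*d + 2*u^3*d^3 + 3*u^3*d^2 + u^3*d + u^3 + u^2*d^4 + 4*u^2*d^3 + 3*u^2*d^2 + u^2*d - u^2 + 2*u*d^4 + 3*u*d^3 + u*d^2 + d^4 + d^3))"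
  for u d x :: complex unfolding nx_def Ccurve_def by algebra

lemma cv2: "u^2 * ((nx x d) + (nx x d)*(x*d) - (u+d)) = (u*x - (u^2 + d*(1+u)))*(u^2*d^2 + u^2*d + u*d^3 + u*d^2*x + 2*u*d^2 + u*d*x + u*d + u + d^3 + d^2) + Ccurve u (u+d)*(u*d + d)"
  for u d x :: complex unfolding nx_def Ccurve_def by algebra

lemma fwd_core:
  fixes u d x :: complex
  assumes e0: "u*x = (u^2 + d*(1+u))" and e3: "u = (nx (nx (nx x d) (x*d)) ((nx x d)*(x*d)))" and e4: "u*((nx (nx x d) (x*d))*((nx x d)*(x*d))) = d"
    and u0: "u \<noteq> 0" and d0: "d \<noteq> 0" and u1: "1+u \<noteq> 0"
  shows "Ccurve u (u+d) = 0"
proof -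
  have h0: "u*x - (u^2 + d*(1+u)) = 0" using e0 by simp
  have a3: "u - (nx (nx (nx x d) (x*d)) ((nx x d)*(x*d))) = 0" using e3 by simp
  have a4: "u*((nx (nx x d) (x*d))*((nx x d)*(x*d))) - d = 0" using e4 by simp
  have "Ccurve u (u+d)*(d*(1+u)*(0 - u^4*d^2 - u^4*d - 2*u^3*d^3 - 3*u^3*d^2 - u^3*d - u^3 - u^2*d^4 - 4*u^2*d^3 - 3*u^2*d^2 - u^2*d - u^2 - 2*u*d^4 - 3*u*d^3 - u*d^2 - d^4 - d^3)) = 0" by (rule lc[OF c3 a3 h0])
  then have b3: "Ccurve u (u+d)*(0 - u^4*d^2 - u^4*d - 2*u^3*d^3 - 3*u^3*d^2 - u^3*d - u^3 - u^2*d^4 - 4*u^2*d^3 - 3*u^2*d^2 - u^2*d - u^2 - 2*u*d^4 - 3*u*d^3 - u*d^2 - d^4 - d^3) = 0" using d0 u1 by simp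
  have "Ccurve u (u+d)*(u*(1+u)*d*(u^4*d^2 + u^4*d + 2*u^3*d^3 + 3*u^3*d^2 + u^3*d + u^3 + u^2*d^4 + 4*u^2*d^3 + 3*u^2*d^2 + u^2*d - u^2 + 2*u*d^4 + 3*u*d^3 + u*d^2 + d^4 + d^3)) = 0" by (rule lc[OF c4 a4 h0])
  then have b4: "Ccurve u (u+d)*(u^4*d^2 + u^4*d + 2*u^3*d^3 + 3*u^3*d^2 + u^3*d + u^3 + u^2*d^4 + 4*u^2*d^3 + 3*u^2*d^2 + u^2*d - u^2 + 2*u*d^4 + 3*u*d^3 + u*d^2 + d^4 + d^3) = 0" using d0 u1 u0 by simp
  have "Ccurve u (u+d)*((0 - u^4*d^2 - u^4*d - 2*u^3*d^3 - 3*u^3*d^2 - u^3*d - u^3 - u^2*d^4 - 4*u^2*d^3 - 3*u^2*d^2 - u^2*d - u^2 - 2*u*d^4 - 3*u*d^3 - u*d^2 - d^4 - d^3) + (u^4*d^2 + u^4*d + 2*u^3*d^3 + 3*u^3*d^2 + u^3*d + u^3 + u^2*d^4 + 4*u^2*d^3 + 3*u^2*d^2 + u^2*d - u^2 + 2*u*d^4 + 3*u*d^3 + u*d^2 + d^4 + d^3)) = 0" using b3 b4 by (simp only: distrib_left add_0)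
  moreover have "(0 - u^4*d^2 - u^4*d - 2*u^3*d^3 - 3*u^3*d^2 - u^3*d - u^3 - u^2*d^4 - 4*u^2*d^3 - 3*u^2*d^2 - u^2*d - u^2 - 2*u*d^4 - 3*u*d^3 - u*d^2 - d^4 - d^3) + (u^4*d^2 + u^4*d + 2*u^3*d^3 + 3*u^3*d^2 + u^3*d + u^3 + u^2*d^4 + 4*u^2*d^3 + 3*u^2*d^2 + u^2*d - u^2 + 2*u*d^4 + 3*u*d^3 + u*d^2 + d^4 + d^3) = -2*u^2" by algebra
  ultimately show ?thesis using u0 by simp
qed
definition RX :: "complex poly" where "RX = [:0, 1, -1:]"

lemma RX_ne: "RX \<noteq> 0" unfolding RX_def by simp

lemma certX: "poly RX v = Ccurve u v * (v^2 - 2*v + 1) - (u^2 + (v-u)*(1+u)) * (0 - u*v^3 + 2*u*v^2 - u*v + v^4 - v^3 - v^2 + 2*v - 1)"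
  for u v :: complex unfolding RX_def Ccurve_def by (simp only: poly_pCons poly_0) algebra

definition RY :: "complex poly" where "RY = [:0, 0, 0, 0, 0, 1, 1, -1, -1:]"

lemma RY_ne: "RY \<noteq> 0" unfolding RY_def by simp

lemma certY: "poly RY v = Ccurve u v * (0 - v^6 + v^4) - ((u^2 + (v-u)*(1+u)) + (v-u)*(u+(u^2 + (v-u)*(1+u)))) * (0 - v^7 + v^6 + v^5 - v^4)"
  for u v :: complex unfolding RY_def Ccurve_def by (simp only: poly_pCons poly_0) algebra

definition RW :: "complex poly" where "RW = [:0, 0, 0, 0, 0, 0, 0, 0, 1, -5, 9, -5, -5, 9, -5, 1:]"

lemma RW_ne: "RW \<noteq> 0" unfolding RW_def by simp

lemma certW: "poly RW v = Ccurve u v * (0 - u^3*v^14 + 6*u^3*v^13 - 13*u^3*v^12 + 7*u^3*v^11 + 21*u^3*v^10 - 49*u^3*v^9 + 49*u^3*v^8 - 27*u^3*v^7 + 8*u^3*v^6 - u^3*v^5 + u^2*v^15 - 7*u^2*v^14 + 18*u^2*v^13 - 13*u^2*v^12 - 35*u^2*v^11 + 105*u^2*v^10 - 133*u^2*v^9 + 97*u^2*v^8 - 42*u^2*v^7 + 10*u^2*v^6 - u^2*v^5 + u*v^15 - 4*u*v^14 - 2*u*v^13 + 41*u*v^12 - 104*u*v^11 + 126*u*v^10 - 70*u*v^9 - 8*u*v^8 + 39*u*v^7 - 26*u*v^6 + 8*u*v^5 - u*v^4 + 2*v^14 - 13*v^13 + 35*v^12 - 48*v^11 + 29*v^10 +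 8*v^9 - 27*v^8 + 20*v^7 - 7*v^6 + v^5) - (u*((u^2 + (v-u)*(1+u)) + (v-u)*(u+(u^2 + (v-u)*(1+u)))) + (u^2 + (v-u)*(1+u))*(v-u)*(u+((u^2 + (v-u)*(1+u)) + (v-u)*(u+(u^2 + (v-u)*(1+u)))))) * (u*v^14 - 6*u*v^13 + 13*u*v^12 - 7*u*v^11 - 21*u*v^10 + 49*u*v^9 - 49*u*v^8 + 27*u*v^7 - 8*u*v^6 + u*v^5 + 2*v^13 - 13*v^12 + 34*v^11 - 42*v^10 + 14*v^9 + 28*v^8 - 42*v^7 + 26*v^6 - 8*v^5 + v^4)"
  for u v :: complex unfolding RW_def Ccurve_def by (simp only: poly_pCons poly_0) algebra

definition Rp2 :: "complex poly" where "Rp2 = [:0, 0, -1, 1, 3, 1, 1, -1, -3, -1:]"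

lemma Rp2_ne: "Rp2 \<noteq> 0" unfolding Rp2_def by simp

lemma certp2: "poly Rp2 v = Ccurve u v * (u*v^6 - u*v^5 - 2*u*v^4 + 2*u*v^3 + u*v^2 - u*v - v^7 - v^5 - 2*v^4 + 3*v^3 + 2*v^2 - v) - (((u^2 + (v-u)*(1+u)) + (v-u)*(u+(u^2 + (v-u)*(1+u)))) - u^2) * (u*v^7 - 3*u*v^6 + 2*u*v^5 + 2*u*v^4 - 3*u*v^3 + u*v^2 - v^8 + v^7 + v^6 - 3*v^5 + 3*v^4 + v^3 - 3*v^2 + v)"
  for u v :: complex unfolding Rp2_def Ccurve_def by (simp only: poly_pCons poly_0) algebra
lemma lc2: "(R::complex) = C*A - K*B \<Longrightarrow> C = 0 \<Longrightarrow> K = 0 \<Longrightarrow> R = 0" by simp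
lemma lc3: "(c::complex) * A = B * K + C * F \<Longrightarrow> B = 0 \<Longrightarrow> C = 0 \<Longrightarrow> c \<noteq> 0 \<Longrightarrow> A = 0" by simp

lemma Gd: "u \<noteq> 0 \<Longrightarrow> G (u, u+d) = ((u^2 + d*(1+u))/u, (u^2 + d*(1+u))/u + (u^2 + d*(1+u))/u * d)"
  unfolding G_def Let_def by (simp add: field_simps power2_eq_square)

lemma Gm: "u \<noteq> 0 \<Longrightarrow> G (u, u + u*e) = (nx u e, nx u e + nx u e * (u*e))"
  unfolding G_def Let_def nx_def by (simp add: field_simps power2_eq_square)

lemma ep4: "exact_period 4 z \<longleftrightarrow> fst z \<noteq> 0 \<and> fst (G z) \<noteq> 0 \<and> fst (G (G z)) \<noteq> 0 \<and> fst (G (G (G z))) \<noteq> 0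
   \<and> G (G (G (G z))) = z \<and> G z \<noteq> z \<and> G (G z) \<noteq> z \<and> G (G (G z)) \<noteq> z"
proof -
  have a: "(\<forall>k<4::nat. P k) \<longleftrightarrow> P 0 \<and> P 1 \<and> P 2 \<and> P 3" for P
    by (auto simp: numeral_eq_Suc less_Suc_eq)
  have b: "(\<forall>k::nat. 0 < k \<and> k < 4 \<longrightarrow> P k) \<longleftrightarrow> P 1 \<and> P 2 \<and> P 3" for P
    by (auto simp: numeral_eq_Suc less_Suc_eq)
  show ?thesis unfolding exact_period_def a b by (simp add: numeral_eq_Suc)
qed

lemma ep_G: "exact_period 4 z \<Longrightarrow> exact_period 4 (G z)"
  unfolding ep4 by metis

lemma fwd:
  assumes "exact_period 4 z" shows "Ccurve (fst z) (snd z) = 0"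
proof -
  obtain u v where z: "z = (u,v)" by (cases z)
  define d where "d = v - u"
  have zd: "z = (u, u+d)" using z d_def by simp
  note E = assms[unfolded ep4]
  have u0: "u \<noteq> 0" using E zd by simp
  define x where "x = (u^2 + d*(1+u))/u"
  have e0: "u*x = u^2 + d*(1+u)" using u0 x_def by simp
  have g1: "G z = (x, x + x*d)" using Gd[OF u0, of d] zd x_def by simp
  have x0: "x \<noteq> 0" using E g1 by simp
  define Y where "Y = nx x d"
  have g2: "G (G z) = (Y, Y + Y*(x*d))" using g1 Gm[OF x0, of d] Y_def by simp
  have Y0: "Y \<noteq> 0" using E g2 by simp
  define W where "W = nx Y (x*d)"
  have g3: "G (G (G z)) = (W, W + W*(Y*(x*d)))" using g2 Gm[OF Y0, of "x*d"] W_def by simp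
  have W0: "W \<noteq> 0" using E g3 by simp
  define T where "T = nx W (Y*(x*d))"
  have g4: "G (G (G (G z))) = (T, T + T*(W*(Y*(x*d))))" using g3 Gm[OF W0, of "Y*(x*d)"] T_def by simp
  have "(T, T + T*(W*(Y*(x*d)))) = (u, u+d)" using E g4 zd by metis
  then have e3: "u = T" and e4': "T + T*(W*(Y*(x*d))) = u + d" by auto
  have e4: "u*(W*(Y*(x*d))) = d" using e3 e4' by (metis add_left_cancel)
  have d0: "d \<noteq> 0"
  proof
    assume "d = 0"
    then have "x = u" using e0 u0 by (simp add: power2_eq_square)
    then have "G z = z" using g1 zd \<open>d = 0\<close> by simp
    then show False using E by simp
  qed
  have u1: "1 + u \<noteq> 0"
  proof
    assume h: "1 + u = 0"
    then have um: "u = -1" by (simp add: add_eq_0_iff)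
    then have "x = -1" using e0 by (simp add: minus_equation_iff)
    then have "Y = -1" unfolding Y_def nx_def by simp
    then have "G (G z) = z" using g2 zd um \<open>x = -1\<close> by simp
    then show False using E by simp
  qed
  have "Ccurve u (u+d) = 0"
    by (rule fwd_core[OF e0 e3[unfolded T_def W_def Y_def] e4[unfolded W_def Y_def] u0 d0 u1])
  then show ?thesis using zd by simp
qed

lemma bwd:
  assumes C: "Ccurve u v = 0" and D: "v^3 + v^2 \<noteq> 0"
    and nX: "poly RX v \<noteq> 0" and nY: "poly RY v \<noteq> 0" and nW: "poly RW v \<noteq> 0" and nP: "poly Rp2 v \<noteq> 0"
  shows "exact_period 4 (u,v) \<and> (\<exists>y. y \<noteq> u \<and> exact_period 4 (y,v))"
proof -
  have u0: "u \<noteq> 0" using C D unfolding Ccurve_def by auto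
  define d where "d = v - u"
  define z where "z = (u, u+d)"
  have zd: "(u,v) = z" using z_def d_def by simp
  have Cd: "Ccurve u (u+d) = 0" using C d_def by simp
  define x where "x = (u^2 + d*(1+u))/u"
  have e0: "u*x = u^2 + d*(1+u)" using u0 x_def by simp
  have g1: "G z = (x, x + x*d)" using Gd[OF u0, of d] z_def x_def by simp
  have x0: "x \<noteq> 0"
  proof
    assume "x = 0"
    then have "u^2 + (v-u)*(1+u) = 0" using e0 d_def by simp
    then have "poly RX v = 0" by (rule lc2[OF certX C])
    then show False using nX by simp
  qed
  define Y where "Y = nx x d"
  have uY: "u*Y = (u^2 + (v-u)*(1+u)) + (v-u)*(u+(u^2 + (v-u)*(1+u)))"
    using e0 unfolding Y_def nx_def d_def by algebra
  have g2: "G (G z) = (Y, Y + Y*(x*d))" using g1 Gm[OF x0, of d] Y_def by simp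
  have Y0: "Y \<noteq> 0"
  proof
    assume "Y = 0"
    then have "(u^2 + (v-u)*(1+u)) + (v-u)*(u+(u^2 + (v-u)*(1+u))) = 0" using uY by simp
    then have "poly RY v = 0" by (rule lc2[OF certY C])
    then show False using nY by simp
  qed
  have Yu: "Y \<noteq> u"
  proof
    assume "Y = u"
    then have "((u^2 + (v-u)*(1+u)) + (v-u)*(u+(u^2 + (v-u)*(1+u)))) - u^2 = 0" using uY
      by (simp add: power2_eq_square)
    then have "poly Rp2 v = 0" by (rule lc2[OF certp2 C])
    then show False using nP by simp
  qed
  define W where "W = nx Y (x*d)"
  have uW: "u^2*W = u*((u^2 + (v-u)*(1+u)) + (v-u)*(u+(u^2 + (v-u)*(1+u)))) + (u^2 + (v-u)*(1+u))*(v-u)*(u+((u^2 + (v-u)*(1+u)) + (v-u)*(u+(u^2 + (v-u)*(1+u)))))"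
    using e0 uY unfolding W_def nx_def d_def by algebra
  have g3: "G (G (G z)) = (W, W + W*(Y*(x*d)))" using g2 Gm[OF Y0, of "x*d"] W_def by simp
  have W0: "W \<noteq> 0"
  proof
    assume "W = 0"
    then have "u*((u^2 + (v-u)*(1+u)) + (v-u)*(u+(u^2 + (v-u)*(1+u)))) + (u^2 + (v-u)*(1+u))*(v-u)*(u+((u^2 + (v-u)*(1+u)) + (v-u)*(u+(u^2 + (v-u)*(1+u))))) = 0"
      using uW by simp
    then have "poly RW v = 0" by (rule lc2[OF certW C])
    then show False using nW by simp
  qed
  define T where "T = nx W (Y*(x*d))"
  have g4: "G (G (G (G z))) = (T, T + T*(W*(Y*(x*d))))" using g3 Gm[OF W0, of "Y*(x*d)"] T_def by simp
  have h0: "u*x - (u^2 + d*(1+u)) = 0" using e0 by simp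
  have "u - T = 0" unfolding T_def W_def Y_def
    by (rule lc3[OF c3 h0 Cd]) (use u0 in simp)
  then have e3: "T = u" by simp
  have "u*(W*(Y*(x*d))) - d = 0" unfolding W_def Y_def
    by (rule lc3[OF c4 h0 Cd]) (use u0 in simp)
  then have e4: "u*(W*(Y*(x*d))) = d" by simp
  have G4: "G (G (G (G z))) = z" using g4 e3 e4 z_def by simp
  have ep: "exact_period 4 z"
    unfolding ep4
  proof (intro conjI)
    show "fst z \<noteq> 0" using u0 z_def by simp
    show "fst (G z) \<noteq> 0" using x0 g1 by simp
    show "fst (G (G z)) \<noteq> 0" using Y0 g2 by simp
    show "fst (G (G (G z))) \<noteq> 0" using W0 g3 by simp
    show "G (G (G (G z))) = z" by (rule G4)
    show G2: "G (G z) \<noteq> z" using g2 Yu z_def by simp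
    show "G z \<noteq> z" using G2 by metis
    show "G (G (G z)) \<noteq> z" using G2 G4 by metis
  qed
  have "nx x d + nx x d*(x*d) - (u+d) = 0"
    by (rule lc3[OF cv2 h0 Cd]) (use u0 in simp)
  then have "Y + Y*(x*d) = v" using u0 d_def Y_def by simp
  then have "G (G z) = (Y, v)" using g2 by simp
  moreover have "exact_period 4 (G (G z))" using ep ep_G by blast
  ultimately show ?thesis using ep zd Yu by auto
qed
lemma root_exists:
  assumes L: "v - v^2 \<noteq> 0" shows "\<exists>u. Ccurve u v = 0"
proof -
  define a where "a = v - v^2"
  define b where "b = v^3 - v^2 - v + 1"
  define c where "c = v^3 + v^2"
  define s where "s = csqrt (b^2 - 4*a*c)"
  have s2: "s^2 = b^2 - 4*a*c" unfolding s_def by simp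
  have a0: "a \<noteq> 0" using L a_def by simp
  define u where "u = (-b + s)/(2*a)"
  have "a*u^2 + b*u + c = (s^2 - (b^2 - 4*a*c))/(4*a)"
    unfolding u_def using a0 by (simp add: field_simps power2_eq_square)
  also have "\<dots> = 0" using s2 by simp
  finally have "a*u^2 + b*u + c = 0" .
  then have "Ccurve u v = 0" unfolding Ccurve_def a_def b_def c_def by (simp add: algebra_simps)
  then show ?thesis by blast
qed

definition ev :: "complex poly poly \<Rightarrow> complex \<Rightarrow> complex \<Rightarrow> complex" where
  "ev P u v = poly (poly P [:u:]) v"

lemma ev_mult: "ev (A*B) u v = ev A u v * ev B u v" by (simp add: ev_def)
lemma ev_add: "ev (A+B) u v = ev A u v + ev B u v" by (simp add: ev_def)
lemma ev_smult: "ev (smult c A) u v = poly c v * ev A u v" by (simp add: ev_def)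

lemma constlift: "poly (map_poly (\<lambda>c. [:c:]) a) [:u:] = [:poly a u:]"
  by (induct a) (simp_all add: map_poly_pCons mult_ac)

lemma swap_exists: "\<exists>P'. \<forall>u v. ev P' u v = poly (poly p [:v:]) u"
proof (induct p)
  case 0
  show ?case by (rule exI[of _ 0]) (simp add: ev_def)
next
  case (pCons a p)
  then obtain P where P: "\<forall>u v. ev P u v = poly (poly p [:v:]) u" by blast
  show ?case
  proof (rule exI[of _ "map_poly (\<lambda>c. [:c:]) a + [:[:0,1:]:] * P"], intro allI)
    fix u v
    have "ev (map_poly (\<lambda>c. [:c:]) a + [:[:0,1:]:] * P) u v = poly a u + v * ev P u v"
      by (simp add: ev_def constlift)
    also have "\<dots> = poly (poly (pCons a p) [:v:]) u" using P by simp
    finally show "ev (map_poly (\<lambda>c. [:c:]) a + [:[:0,1:]:] * P) u v = poly (poly (pCons a p) [:v:]) u" .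
  qed
qed

lemma cancel1:
  fixes \<pi> :: "complex poly" and Q X q :: "complex poly poly"
  assumes pr: "prime_elem \<pi>" and nd: "\<not> [:\<pi>:] dvd Q"
  shows "smult (\<pi>^k) X = Q * q \<Longrightarrow> \<exists>q'. X = Q * q'"
proof (induction k arbitrary: q)
  case 0
  then show ?case by auto
next
  case (Suc k)
  have pc: "prime_elem [:\<pi>:]" using pr by (simp add: prime_elem_const_poly_iff)
  have nz: "[:\<pi>:] \<noteq> 0" using pc by (auto simp: prime_elem_def)
  have eq: "[:\<pi>:] * smult (\<pi>^k) X = Q * q" using Suc.prems by (simp add: mult.commute)
  then have "[:\<pi>:] dvd Q * q" by (metis dvd_triv_left)
  then have "[:\<pi>:] dvd q" using pc nd prime_elem_dvd_multD by blast
  then obtain q2 where q2: "q = [:\<pi>:] * q2" by (auto elim: dvdE)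
  have "[:\<pi>:] * smult (\<pi>^k) X = [:\<pi>:] * (Q * q2)" using eq q2 by (simp add: ac_simps)
  then have "smult (\<pi>^k) X = Q * q2" using nz mult_cancel_left by blast
  then show ?case by (rule Suc.IH)
qed

definition Qc :: "complex poly poly" where
  "Qc = [: [:0,0,1,1:], [:1,-1,-1,1:], [:0,1,-1:] :]"

lemma evQ: "ev Qc u v = Ccurve u v"
  unfolding ev_def Qc_def Ccurve_def by simp algebra

lemma Qc_ne: "Qc \<noteq> 0" unfolding Qc_def by simp
lemma Qc_deg: "degree Qc = 2" unfolding Qc_def by simp
lemma Qc_lc: "coeff Qc (degree Qc) = [:0,1,-1:]" unfolding Qc_def by simp

lemma Qc_nd1: "\<not> [:[:0,1:]:] dvd Qc"
proof
  assume "[:[:0,1:]:] dvd Qc"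
  then have "[:0,1:] dvd coeff Qc 1" by (simp add: const_poly_dvd_iff)
  then have "[:0,1:] dvd ([:1,-1,-1,1:] :: complex poly)" unfolding Qc_def by simp
  then have "poly ([:1,-1,-1,1:] :: complex poly) (- 0) = 0" by (simp only: dvd_iff_poly_eq_0)
  then show False by simp
qed

lemma Qc_nd2: "\<not> [:[:-1,1:]:] dvd Qc"
proof
  assume "[:[:-1,1:]:] dvd Qc"
  then have "[:-1,1:] dvd coeff Qc 0" by (simp add: const_poly_dvd_iff)
  then have "[:-1,1:] dvd ([:0,0,1,1:] :: complex poly)" unfolding Qc_def by simp
  then have "poly ([:0,0,1,1:] :: complex poly) (- (-1)) = 0" by (simp only: dvd_iff_poly_eq_0)
  then show False by simp
qed

lemma cancel_all:
  assumes "smult ([:0,1,-1:]^k) P = Qc * q" shows "\<exists>q'. P = Qc * q'"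
proof -
  have L: "([:0,1,-1:] :: complex poly) = [:0,1:] * ([:-1,1:] * (-1))" by simp
  have Lk: "([:0,1,-1:]::complex poly)^k = [:0,1:]^k * ([:-1,1:]^k * (-1)^k)"
    by (simp only: L power_mult_distrib)
  have "smult ([:0,1:]^k) (smult ([:-1,1:]^k) (smult ((-1)^k) P)) = smult ([:0,1,-1:]^k) P"
    by (simp only: Lk smult_smult mult.assoc)
  then have "smult ([:0,1:]^k) (smult ([:-1,1:]^k) (smult ((-1)^k) P)) = Qc * q"
    using assms by simp
  then obtain q1 where "smult ([:-1,1:]^k) (smult ((-1)^k) P) = Qc * q1"
    using cancel1[OF prime_elem_linear_field_poly Qc_nd1] by fastforce
  then obtain q2 where "smult ((-1)^k) P = Qc * q2"
    using cancel1[OF prime_elem_linear_field_poly Qc_nd2] by fastforce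
  then have "smult ((-1)^k) (smult ((-1)^k) P) = Qc * smult ((-1)^k) q2" by simp
  then have "P = Qc * smult ((-1)^k) q2" by (simp flip: power_mult_distrib)
  then show ?thesis by blast
qed

lemma deg1_ev:
  assumes "r = 0 \<or> degree r < 2"
  shows "ev r u v = poly (coeff r 0) v + u * poly (coeff r 1) v"
proof -
  have "r = [:coeff r 0, coeff r 1:]"
  proof (rule poly_eqI)
    fix n show "coeff r n = coeff [:coeff r 0, coeff r 1:] n"
      using assms by (cases n; cases "n - 1") (auto simp: coeff_eq_0)
  qed
  then have "ev r u v = ev [:coeff r 0, coeff r 1:] u v" by simp
  also have "\<dots> = poly (coeff r 0) v + u * poly (coeff r 1) v" by (simp add: ev_def)
  finally show ?thesis .
qed

definition Eb :: "complex poly" where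
  "Eb = [:0,1,-1:] * [:0,0,1,1:] * RX * RY * RW * Rp2"

lemma Eb_ne: "Eb \<noteq> 0"
  unfolding Eb_def mult_eq_0_iff using RX_ne RY_ne RW_ne Rp2_ne by (simp del: mult_pCons_left mult_pCons_right)

lemma good_inf: "infinite {v. poly Eb v \<noteq> 0}"
proof
  assume f: "finite {v. poly Eb v \<noteq> 0}"
  have "finite {v. poly Eb v = 0}" using poly_roots_finite[OF Eb_ne] .
  then have "finite ({v. poly Eb v \<noteq> 0} \<union> {v. poly Eb v = 0})" using f by simp
  moreover have "{v. poly Eb v \<noteq> 0} \<union> {v. poly Eb v = 0} = (UNIV :: complex set)" by auto
  ultimately show False using infinite_UNIV_char_0[where 'a=complex] by simp
qed

lemma good_pts:
  assumes "poly Eb v \<noteq> 0"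
  shows "\<exists>u y. u \<noteq> y \<and> exact_period 4 (u,v) \<and> exact_period 4 (y,v)"
proof -
  have h: "v - v^2 \<noteq> 0" "v^3 + v^2 \<noteq> 0" "poly RX v \<noteq> 0" "poly RY v \<noteq> 0" "poly RW v \<noteq> 0" "poly Rp2 v \<noteq> 0"
  proof -
    have nz: "poly [:0,1,-1:] v * poly [:0,0,1,1:] v * poly RX v * poly RY v * poly RW v * poly Rp2 v \<noteq> 0"
      using assms[unfolded Eb_def] by (simp only: poly_mult not_False_eq_True)
    have e1: "poly [:0,1,-1:] v = v - v^2" by (simp add: power2_eq_square algebra_simps)
    have e2: "poly [:0,0,1,1:] v = v^3 + v^2" by (simp add: power2_eq_square power3_eq_cube algebra_simps)
    show "v - v^2 \<noteq> 0" "v^3 + v^2 \<noteq> 0" "poly RX v \<noteq> 0" "poly RY v \<noteq> 0" "poly RW v \<noteq> 0" "poly Rp2 v \<noteq> 0"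
      using nz[unfolded e1 e2] by auto
  qed
  obtain u where "Ccurve u v = 0" using root_exists[OF h(1)] by blast
  from bwd[OF this h(2-6)] show ?thesis by metis
qed

lemma zar:
  assumes hp: "\<forall>y\<in>{z. exact_period 4 z}. eval2 p y = 0" and C: "Ccurve u v = 0"
  shows "eval2 p (u,v) = 0"
proof -
  obtain P where P: "\<forall>u v. ev P u v = poly (poly p [:v:]) u" using swap_exists by blast
  have Pev: "ev P u v = eval2 p (u,v)" for u v using P by (simp add: eval2_def)
  obtain q r where pd: "pseudo_divmod P Qc = (q, r)" by (metis surj_pair)
  define k where "k = Suc (degree P) - degree Qc"
  have id: "smult ([:0,1,-1:] ^ k) P = Qc * q + r"
    using pseudo_divmod(1)[OF Qc_ne pd] unfolding k_def Qc_lc by simp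
  have rd: "r = 0 \<or> degree r < 2" using pseudo_divmod(2)[OF Qc_ne pd] Qc_deg by simp
  have evr: "ev r t w = poly (coeff r 0) w + t * poly (coeff r 1) w" for t w using deg1_ev[OF rd] .
  have key: "poly (coeff r 0) w = 0 \<and> poly (coeff r 1) w = 0" if g: "poly Eb w \<noteq> 0" for w
  proof -
    obtain t1 t2 where t: "t1 \<noteq> t2" "exact_period 4 (t1,w)" "exact_period 4 (t2,w)"
      using good_pts[OF g] by blast
    have z: "ev r t w = 0" if "exact_period 4 (t,w)" for t
    proof -
      have "ev P t w = 0" using Pev hp that by simp
      moreover have "ev Qc t w = 0" using evQ fwd[OF that] by simp
      moreover have "ev (smult ([:0,1,-1:] ^ k) P) t w = ev (Qc * q + r) t w" using id by simp
      ultimately show ?thesis by (simp add: ev_smult ev_add ev_mult)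
    qed
    have a1: "poly (coeff r 0) w + t1 * poly (coeff r 1) w = 0" using z[OF t(2)] evr by simp
    have a2: "poly (coeff r 0) w + t2 * poly (coeff r 1) w = 0" using z[OF t(3)] evr by simp
    have "(t1 - t2) * poly (coeff r 1) w = (poly (coeff r 0) w + t1 * poly (coeff r 1) w) - (poly (coeff r 0) w + t2 * poly (coeff r 1) w)"
      by (simp add: algebra_simps)
    also have "\<dots> = 0" using a1 a2 by simp
    finally have "(t1 - t2) * poly (coeff r 1) w = 0" .
    then have "poly (coeff r 1) w = 0" using t(1) by simp
    then show ?thesis using a1 by simp
  qed
  have r0: "coeff r i = 0" if "i < 2" for i
  proof (rule ccontr)
    assume ne: "coeff r i \<noteq> 0"
    have "{w. poly Eb w \<noteq> 0} \<subseteq> {w. poly (coeff r i) w = 0}"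
      using key that by (auto simp: less_2_cases_iff)
    moreover have "finite {w. poly (coeff r i) w = 0}" using poly_roots_finite[OF ne] .
    ultimately show False using good_inf finite_subset by blast
  qed
  have "r = 0"
  proof (rule poly_eqI)
    fix n show "coeff r n = coeff 0 n"
      using rd r0 by (cases "n < 2") (auto simp: coeff_eq_0)
  qed
  then have "smult ([:0,1,-1:] ^ k) P = Qc * q" using id by simp
  then obtain q' where "P = Qc * q'" using cancel_all by blast
  then have "ev P u v = 0" using evQ C by (simp add: ev_mult)
  then show ?thesis using Pev by simp
qed

definition p0 :: "complex poly poly" where
  "p0 = [: [:0,1:], [:0,-1,1:], [:1,-1,-1:], [:1,1:] :]"

lemma ev_p0: "eval2 p0 z = Ccurve (fst z) (snd z)"
  unfolding eval2_def p0_def Ccurve_def by simp algebra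

lemma curve_iff: "z \<in> period4_curve \<longleftrightarrow> Ccurve (fst z) (snd z) = 0"
  unfolding period4_curve_def Ccurve_def Let_def by simp

theorem mainTheorem6:
  shows "{z. exact_period 4 z} \<subseteq> period4_curve \<and>
         zariski_closure {z. exact_period 4 z} = period4_curve"
proof (intro conjI)
  show "{z. exact_period 4 z} \<subseteq> period4_curve" using fwd curve_iff by auto
  show "zariski_closure {z. exact_period 4 z} = period4_curve"
  proof
    show "zariski_closure {z. exact_period 4 z} \<subseteq> period4_curve"
    proof
      fix z assume "z \<in> zariski_closure {z. exact_period 4 z}"
      then have "\<forall>p. (\<forall>y\<in>{z. exact_period 4 z}. eval2 p y = 0) \<longrightarrow> eval2 p z = 0"
        unfolding zariski_closure_def by simp
      moreover have "\<forall>y\<in>{z. exact_period 4 z}. eval2 p0 y = 0" using fwd ev_p0 by simp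
      ultimately have "eval2 p0 z = 0" by blast
      then show "z \<in> period4_curve" using ev_p0 curve_iff by simp
    qed
    show "period4_curve \<subseteq> zariski_closure {z. exact_period 4 z}"
    proof
      fix z assume "z \<in> period4_curve"
      then have C: "Ccurve (fst z) (snd z) = 0" using curve_iff by simp
      show "z \<in> zariski_closure {z. exact_period 4 z}"
        unfolding zariski_closure_def
        using zar[OF _ C] by (cases z) auto
    qed
  qed
qed
end
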